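(* Let $p\in H(\mathbb{D})$ with $\operatorname{Re}p>0$ and $p(0)=b$ (so $b>0$ is assumed real), and let $a\in\mathbb{R}$. Consider the radial Loewner PDE $\frac{\partial f}{\partial t}(z,t)=-zf'(z,t)p(e^{-iat}z)$, $f(z,0)=z$, on $\mathbb{D}\times[0,\infty)$. Let $\phi$ be the holomorphic function on $\mathbb{D}$ with $\phi(0)=0$, $\phi'(0)=1$, satisfying $z\phi'(z)/\phi(z)=(b-ia)/(p(z)-ia)$, equivalently $zp(z)=iaz+(b-ia)\phi(z)/\phi'(z)$. Then $\phi$ is an $(\operatorname{Arccot}(a/b)-\tfrac{\pi}{2})$-spirallike function of $\mathbb{D}$, and the Loewner flow is $$f(z,t)=\phi^{-1}\big(e^{-(b-ia)t}\phi(e^{-iat}z)\big),\qquad z\in\mathbb{D},\ t\ge0.$$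
   Context: $\operatorname{Arccot}$ takes values in $(0,\pi)$. A simply connected domain $D\ni0$ is $\psi$-spirallike if for every $w_0\in D$ the arc $\{w_0\exp(-e^{i\psi}s):0\le s\le\infty\}$ lies in $D$; a univalent $f\in H(\mathbb{D})$ with $f(0)=0$ is $\psi$-spirallike if $f(\mathbb{D})$ is $\psi$-spirallike. *)

theory Defs
  imports "HOL-Analysis.Analysis"
begin

definition arccot :: "real \<Rightarrow> real" where
  "arccot x = pi / 2 - arctan x"

text \<open>A psi-spirallike domain: a simply connected domain containing 0 such that
  for every w0 in D the arc w0 * exp(-e^(i psi) s), 0 <= s <= infinity, lies in D
  (the endpoint s = infinity is the point 0).\<close>
definition spirallike_domain :: "real \<Rightarrow> complex set \<Rightarrow> bool" where
  "spirallike_domain \<psi> D \<longleftrightarrow>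
     open D \<and> connected D \<and> simply_connected D \<and> 0 \<in> D \<and>
     (\<forall>w0\<in>D. \<forall>s::real. s \<ge> 0 \<longrightarrow> w0 * exp (- exp (\<i> * of_real \<psi>) * of_real s) \<in> D)"

definition spirallike_fun :: "real \<Rightarrow> (complex \<Rightarrow> complex) \<Rightarrow> bool" where
  "spirallike_fun \<psi> f \<longleftrightarrow>
     f holomorphic_on ball 0 1 \<and> inj_on f (ball 0 1) \<and> f 0 = 0 \<and>
     spirallike_domain \<psi> (f ` ball 0 1)"

definition loewner_solution ::
  "(complex \<Rightarrow> complex) \<Rightarrow> real \<Rightarrow> (complex \<Rightarrow> real \<Rightarrow> complex) \<Rightarrow> bool" where
  "loewner_solution p a f \<longleftrightarrow>
     (\<forall>t\<ge>0. (\<lambda>z. f z t) holomorphic_on ball 0 1) \<and>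
     continuous_on (ball 0 1 \<times> {0..}) (\<lambda>(z, t). f z t) \<and>
     (\<forall>z\<in>ball 0 1. f z 0 = z) \<and>
     (\<forall>z\<in>ball 0 1. \<forall>t\<ge>0.
        ((\<lambda>s. f z s) has_vector_derivative
           (- z * deriv (\<lambda>w. f w t) z * p (exp (- \<i> * of_real (a * t)) * z)))
        (at t within {0..}))"

end

theory Submission
  imports Defs "HOL-Complex_Analysis.Complex_Analysis"
begin

lemma noshiro:
  fixes G :: "complex \<Rightarrow> complex"
  assumes "convex S" "open S" "G holomorphic_on S"
    and pos: "\<And>z. z \<in> S \<Longrightarrow> Re (deriv G z * \<mu>) > 0"
  shows "inj_on G S"
proof (rule inj_onI, rule ccontr)
  fix x y assume xS: "x \<in> S" and yS: "y \<in> S" and eq: "G x = G y" and ne: "x \<noteq> y"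
  define d where "d = y - x"
  have dnz: "d \<noteq> 0" using ne by (simp add: d_def)
  define r where "r s = Re (\<mu> * G (x + of_real s * d) / d)" for s :: real
  have inS: "x + of_real s * d \<in> S" if "0 \<le> s" "s \<le> 1" for s
  proof -
    have "x + of_real s * d = (1 - s) *\<^sub>R x + s *\<^sub>R y"
      by (simp add: d_def scaleR_conv_of_real algebra_simps)
    thus ?thesis using convexD_alt[OF assms(1) xS yS, of s] that by simp
  qed
  have der: "DERIV r s :> Re (deriv G (x + of_real s * d) * \<mu>)" if "0 \<le> s" "s \<le> 1" for s
  proof -
    have G': "(G has_field_derivative deriv G (x + of_real s * d)) (at (x + of_real s * d))"
      using assms(2,3) inS[OF that] holomorphic_derivI by blast
    have l: "((\<lambda>w. x + w * d) has_field_derivative d) (at (of_real s))"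
      by (auto intro!: derivative_eq_intros)
    have "((\<lambda>w. \<mu> * G (x + w * d) / d) has_field_derivative (\<mu> * (deriv G (x + of_real s * d) * d) / d)) (at (of_real s))"
      using DERIV_chain2[OF G' l] by (auto intro!: derivative_eq_intros)
    hence "((\<lambda>w. \<mu> * G (x + w * d) / d) has_field_derivative (deriv G (x + of_real s * d) * \<mu>)) (at (of_real s))"
      using dnz by (simp add: field_simps)
    from has_field_derivative_Re[OF has_vector_derivative_real_field[OF this]] show ?thesis unfolding r_def by (simp add: o_def)
  qed
  obtain z where z: "0 < z" "z < 1" "r 1 - r 0 = (1 - 0) * Re (deriv G (x + of_real z * d) * \<mu>)"
    using MVT2[of 0 1 r "\<lambda>s. Re (deriv G (x + of_real s * d) * \<mu>)"] der by force
  have "r 1 = r 0" unfolding r_def using eq by (simp add: d_def)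
  moreover have "Re (deriv G (x + of_real z * d) * \<mu>) > 0" using pos inS z by simp
  ultimately show False using z by simp
qed

lemma joint_deriv_cont:
  fixes f :: "complex \<Rightarrow> real \<Rightarrow> complex"
  assumes hol: "\<And>t. t \<ge> 0 \<Longrightarrow> (\<lambda>z. f z t) holomorphic_on ball 0 1"
    and cont: "continuous_on (ball 0 1 \<times> {0..}) (\<lambda>(z,t). f z t)"
  shows "continuous_on (ball 0 1 \<times> {0..}) (\<lambda>(z,t). deriv (\<lambda>w. f w t) z)"
  unfolding continuous_on_iff
proof (intro ballI allI impI)
  fix x :: "complex \<times> real" and e :: real
  assume xS: "x \<in> ball 0 1 \<times> {0..}" and e: "e > 0"
  obtain z0 t0 where x: "x = (z0, t0)" by (cases x)
  have z0: "norm z0 < 1" and t0: "t0 \<ge> 0" using xS x by auto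
  define \<rho> where "\<rho> = (1 - norm z0) / 3"
  have \<rho>: "\<rho> > 0" using z0 by (simp add: \<rho>_def)
  have cb: "cball z0 (2 * \<rho>) \<subseteq> ball 0 1"
  proof
    fix w assume "w \<in> cball z0 (2 * \<rho>)"
    hence "norm (w - z0) \<le> 2 * \<rho>" by (simp add: dist_norm norm_minus_commute)
    moreover have "norm w \<le> norm z0 + norm (w - z0)" by (metis norm_triangle_sub add.commute)
    ultimately show "w \<in> ball 0 1" using z0 by (simp add: \<rho>_def)
  qed
  define Kc where "Kc = cball z0 (2 * \<rho>) \<times> {0..t0+1}"
  have Kc: "compact Kc" unfolding Kc_def by (intro compact_Times compact_cball compact_Icc)
  have KcS: "Kc \<subseteq> ball 0 1 \<times> {0..}" unfolding Kc_def using cb by auto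
  have "uniformly_continuous_on Kc (\<lambda>(z,t). f z t)"
    by (rule compact_uniformly_continuous[OF continuous_on_subset[OF cont KcS] Kc])
  moreover have e2: "e * \<rho> / 2 > 0" using e \<rho> by simp
  ultimately obtain \<delta>u where \<delta>u: "\<delta>u > 0"
    and uc0: "\<forall>x\<in>Kc. \<forall>x'\<in>Kc. dist x' x < \<delta>u \<longrightarrow>
               dist ((\<lambda>(z,t). f z t) x') ((\<lambda>(z,t). f z t) x) < e * \<rho> / 2"
    unfolding uniformly_continuous_on_def by blast
  have uc: "\<And>x x'. x \<in> Kc \<Longrightarrow> x' \<in> Kc \<Longrightarrow> dist x' x < \<delta>u \<Longrightarrow>
               dist ((\<lambda>(z,t). f z t) x') ((\<lambda>(z,t). f z t) x) < e * \<rho> / 2"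
    using uc0 by blast
  have holt0: "(\<lambda>z. f z t0) holomorphic_on ball 0 1" using hol t0 .
  have "continuous_on (ball 0 1) (deriv (\<lambda>w. f w t0))"
    by (rule holomorphic_on_imp_continuous_on[OF holomorphic_deriv[OF holt0]]) simp
  moreover have "z0 \<in> ball 0 1" using z0 by simp
  moreover have "e / 2 > 0" using e by simp
  ultimately obtain \<delta>1 where \<delta>1: "\<delta>1 > 0"
    and dc0: "\<forall>z\<in>ball 0 1. dist z z0 < \<delta>1 \<longrightarrow>
              dist (deriv (\<lambda>w. f w t0) z) (deriv (\<lambda>w. f w t0) z0) < e / 2"
    unfolding continuous_on_iff by blast
  have dc: "\<And>z. z \<in> ball 0 1 \<Longrightarrow> dist z z0 < \<delta>1 \<Longrightarrow>
              dist (deriv (\<lambda>w. f w t0) z) (deriv (\<lambda>w. f w t0) z0) < e / 2"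
    using dc0 by blast
  define \<delta> where "\<delta> = min (min \<rho> \<delta>1) (min \<delta>u 1)"
  have \<delta>: "\<delta> > 0" using \<rho> \<delta>1 \<delta>u by (simp add: \<delta>_def)
  show "\<exists>d>0. \<forall>x'\<in>ball 0 1 \<times> {0..}. dist x' x < d \<longrightarrow>
          dist ((\<lambda>(z,t). deriv (\<lambda>w. f w t) z) x') ((\<lambda>(z,t). deriv (\<lambda>w. f w t) z) x) < e"
  proof (intro exI[of _ \<delta>] conjI ballI impI \<delta>)
    fix x' :: "complex \<times> real" assume x'S: "x' \<in> ball 0 1 \<times> {0..}" and dx: "dist x' x < \<delta>"
    obtain z t where x': "x' = (z, t)" by (cases x')
    have zb: "z \<in> ball 0 1" and t: "t \<ge> 0" using x'S x' by auto
    have dz: "dist z z0 < \<delta>" using dist_fst_le[of x' x] dx x x' by simp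
    have dt: "dist t t0 < \<delta>" using dist_snd_le[of x' x] dx x x' by simp
    define h where "h w = f w t - f w t0" for w
    have holt: "(\<lambda>z. f z t) holomorphic_on ball 0 1" using hol t .
    have hh: "h holomorphic_on ball 0 1" unfolding h_def by (intro holomorphic_intros holt holt0)
    have cbz: "cball z \<rho> \<subseteq> cball z0 (2 * \<rho>)"
    proof
      fix w assume "w \<in> cball z \<rho>"
      hence "dist z w \<le> \<rho>" by simp
      moreover have "dist z0 w \<le> dist z0 z + dist z w" by (rule dist_triangle)
      moreover have "dist z0 z < \<rho>" using dz by (simp add: \<delta>_def dist_commute)
      ultimately show "w \<in> cball z0 (2 * \<rho>)" by simp
    qed
    have bound: "norm (h w) \<le> e * \<rho> / 2" if "norm (z - w) = \<rho>" for w
    proof -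
      have "w \<in> cball z \<rho>" using that by (simp add: dist_norm)
      hence wK: "w \<in> cball z0 (2 * \<rho>)" using cbz by blast
      have "dist (w, t) (w, t0) < \<delta>u"
        using dt by (simp add: dist_Pair_Pair \<delta>_def)
      moreover have "(w, t) \<in> Kc" "(w, t0) \<in> Kc"
        using wK t t0 dt by (auto simp: Kc_def \<delta>_def dist_real_def)
      ultimately have "dist (f w t) (f w t0) < e * \<rho> / 2" using uc by fastforce
      thus ?thesis by (simp add: h_def dist_norm)
    qed
    have "norm ((deriv ^^ 1) h z) \<le> fact 1 * (e * \<rho> / 2) / \<rho> ^ 1"
    proof (rule Cauchy_inequality)
      have sub2: "cball z \<rho> \<subseteq> ball 0 1" using cbz cb by (rule subset_trans)
      have sub1: "ball z \<rho> \<subseteq> ball 0 1" using ball_subset_cball sub2 by (rule subset_trans)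
      show "h holomorphic_on ball z \<rho>"
        by (rule holomorphic_on_subset[OF hh sub1])
      show "continuous_on (cball z \<rho>) h"
        by (rule continuous_on_subset[OF holomorphic_on_imp_continuous_on[OF hh] sub2])
    qed (use \<rho> bound in auto)
    hence hd: "norm (deriv h z) \<le> e / 2" using \<rho> by simp
    have "deriv h z = deriv (\<lambda>w. f w t) z - deriv (\<lambda>w. f w t0) z"
      unfolding h_def
      by (rule deriv_diff; rule holomorphic_on_imp_differentiable_at[OF _ _ zb]) (use holt holt0 in auto)
    hence p1: "dist (deriv (\<lambda>w. f w t) z) (deriv (\<lambda>w. f w t0) z) \<le> e / 2"
      using hd by (simp add: dist_norm)
    have p2: "dist (deriv (\<lambda>w. f w t0) z) (deriv (\<lambda>w. f w t0) z0) < e / 2"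
      using dc[OF zb] dz by (simp add: \<delta>_def)
    have "dist (deriv (\<lambda>w. f w t) z) (deriv (\<lambda>w. f w t0) z0) < e"
      using dist_triangle[of "deriv (\<lambda>w. f w t) z" "deriv (\<lambda>w. f w t0) z0" "deriv (\<lambda>w. f w t0) z"] p1 p2
      by linarith
    thus "dist ((\<lambda>(z,t). deriv (\<lambda>w. f w t) z) x') ((\<lambda>(z,t). deriv (\<lambda>w. f w t) z) x) < e"
      using x x' by simp
  qed
qed

locale LS =
  fixes p \<phi> :: "complex \<Rightarrow> complex" and a b :: real
  assumes p_holo: "p holomorphic_on ball 0 1"
    and p_re: "\<forall>z\<in>ball 0 1. Re (p z) > 0"
    and p0: "p 0 = of_real b"
    and phi_holo: "\<phi> holomorphic_on ball 0 1"
    and phi0: "\<phi> 0 = 0"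
    and dphi0: "deriv \<phi> 0 = 1"
    and phi_eq: "\<forall>z\<in>ball 0 1 - {0}.
                   z * deriv \<phi> z / \<phi> z = (of_real b - \<i> * of_real a) / (p z - \<i> * of_real a)"
begin

definition c where "c = of_real b - \<i> * of_real a"
definition q where "q z = p z - \<i> * of_real a"

lemma b_pos: "b > 0"
proof -
  have "Re (p 0) > 0" using p_re by simp
  thus ?thesis using p0 by simp
qed

lemma c_nz: "c \<noteq> 0"
  using b_pos by (auto simp: c_def complex_eq_iff)

lemma q_re: "z \<in> ball 0 1 \<Longrightarrow> Re (q z) > 0"
  using p_re by (simp add: q_def)

lemma q_nz: "z \<in> ball 0 1 \<Longrightarrow> q z \<noteq> 0"
  using q_re by force

lemma phi_nz: assumes "z \<in> ball 0 1" "z \<noteq> 0" shows "\<phi> z \<noteq> 0"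
proof
  assume z0: "\<phi> z = 0"
  have "z * deriv \<phi> z / \<phi> z = c / q z" using phi_eq assms by (simp add: c_def q_def)
  then have "c / q z = 0" using z0 by simp
  thus False using c_nz q_nz[OF assms(1)] by simp
qed

lemma E: assumes "z \<in> ball 0 1" shows "z * deriv \<phi> z * q z = c * \<phi> z"
proof (cases "z = 0")
  case True thus ?thesis using phi0 by simp
next
  case False
  have "z * deriv \<phi> z / \<phi> z = c / q z" using phi_eq assms False by (auto simp: c_def q_def)
  thus ?thesis using phi_nz[OF assms False] q_nz[OF assms] by (simp add: field_simps)
qed

lemma dphi_nz: assumes "z \<in> ball 0 1" shows "deriv \<phi> z \<noteq> 0"
proof (cases "z = 0")
  case True thus ?thesis using dphi0 by simp
next
  case False thus ?thesis using E[OF assms] phi_nz[OF assms False] c_nz by auto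
qed

lemma phi_inj: "inj_on \<phi> (ball 0 1)"
proof -
  define h where "h z = (if z = 0 then deriv \<phi> 0 else (\<phi> z - \<phi> 0) / (z - 0))" for z
  have hhol: "h holomorphic_on ball 0 1"
    unfolding h_def by (rule pole_lemma[OF phi_holo]) simp
  have hnz: "h z \<noteq> 0" if "z \<in> ball 0 1" for z
    using phi_nz[OF that] dphi0 phi0 by (auto simp: h_def)
  obtain L where Lhol: "L holomorphic_on ball 0 1" and L: "\<And>z. z \<in> ball 0 1 \<Longrightarrow> exp (L z) = h z"
    using holomorphic_logarithm_exists[of "ball 0 1" h 0] hhol hnz by auto
  define H where "H = {\<zeta>::complex. Re \<zeta> < 0}"
  have openH: "open H" unfolding H_def by (simp add: open_halfspace_Re_lt)
  have convH: "convex H" unfolding H_def by (simp add: convex_halfspace_Re_lt)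
  have expH: "exp \<zeta> \<in> ball 0 1" if "\<zeta> \<in> H" for \<zeta>
    using that by (simp add: H_def)
  define G where "G \<zeta> = \<zeta> + L (exp \<zeta>)" for \<zeta>
  have Ghol: "G holomorphic_on H"
    unfolding G_def
    by (intro holomorphic_intros holomorphic_on_compose_gen[OF _ Lhol, unfolded o_def]) (auto intro: expH holomorphic_intros)
  have expG: "exp (G \<zeta>) = \<phi> (exp \<zeta>)" if "\<zeta> \<in> H" for \<zeta>
    using L[OF expH[OF that]] phi0 by (simp add: G_def exp_add h_def)
  have Gd: "deriv G \<zeta> * \<phi> (exp \<zeta>) = deriv \<phi> (exp \<zeta>) * exp \<zeta>" if "\<zeta> \<in> H" for \<zeta>
  proof -
    have d1: "((\<lambda>w. exp (G w)) has_field_derivative exp (G \<zeta>) * deriv G \<zeta>) (at \<zeta>)"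
      using holomorphic_derivI[OF Ghol openH that] by (auto intro!: derivative_eq_intros)
    have dphi: "(\<phi> has_field_derivative deriv \<phi> (exp \<zeta>)) (at (exp \<zeta>))"
      using holomorphic_derivI[OF phi_holo _ expH[OF that]] by simp
    have d2: "((\<lambda>w. \<phi> (exp w)) has_field_derivative deriv \<phi> (exp \<zeta>) * exp \<zeta>) (at \<zeta>)"
      using DERIV_chain2[OF dphi DERIV_exp] by simp
    have d3: "((\<lambda>w. exp (G w)) has_field_derivative deriv \<phi> (exp \<zeta>) * exp \<zeta>) (at \<zeta>)"
      using has_field_derivative_transform_within_open[OF d2 openH that] expG by simp
    show ?thesis using DERIV_unique[OF d1 d3] expG[OF that] by (simp add: mult.commute)
  qed
  have Gpos: "Re (deriv G \<zeta> * (1 / c)) > 0" if "\<zeta> \<in> H" for \<zeta>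
  proof -
    let ?z = "exp \<zeta>"
    have zb: "?z \<in> ball 0 1" using expH[OF that] .
    have "?z \<noteq> 0" by simp
    hence pnz: "\<phi> ?z \<noteq> 0" using phi_nz[OF zb] by simp
    have "deriv G \<zeta> = ?z * deriv \<phi> ?z / \<phi> ?z" using Gd[OF that] pnz by (simp add: field_simps)
    also have "\<dots> = c / q ?z" using E[OF zb] pnz q_nz[OF zb] by (simp add: field_simps)
    finally have "deriv G \<zeta> * (1 / c) = 1 / q ?z" using c_nz by simp
    moreover have "Re (1 / q ?z) > 0" using q_re[OF zb] q_nz[OF zb]
      by (simp add: Re_divide complex_neq_0)
    ultimately show ?thesis by simp
  qed
  have Ginj: "inj_on G H" by (rule noshiro[OF convH openH Ghol Gpos])
  show ?thesis
  proof (rule inj_onI)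
    fix z1 z2 assume z1: "z1 \<in> ball 0 1" and z2: "z2 \<in> ball 0 1" and eq: "\<phi> z1 = \<phi> z2"
    show "z1 = z2"
    proof (cases "z1 = 0 \<or> z2 = 0")
      case True thus ?thesis using eq phi0 phi_nz z1 z2 by metis
    next
      case False
      hence nz: "z1 \<noteq> 0" "z2 \<noteq> 0" by auto
      define \<zeta>1 where "\<zeta>1 = Ln z1"
      define \<zeta>2 where "\<zeta>2 = Ln z2"
      have e1: "exp \<zeta>1 = z1" and e2: "exp \<zeta>2 = z2" using nz by (simp_all add: \<zeta>1_def \<zeta>2_def)
      have H1: "\<zeta>1 \<in> H" using nz z1 by (simp add: H_def \<zeta>1_def)
      have H2: "\<zeta>2 \<in> H" using nz z2 by (simp add: H_def \<zeta>2_def)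
      have "exp (G \<zeta>1) = exp (G \<zeta>2)" using expG[OF H1] expG[OF H2] e1 e2 eq by simp
      then obtain n :: int where n: "G \<zeta>1 = G \<zeta>2 + (of_int (2 * n) * pi) * \<i>"
        unfolding exp_eq by blast
      define \<zeta>3 where "\<zeta>3 = \<zeta>2 + (of_int (2 * n) * pi) * \<i>"
      have e3: "exp \<zeta>3 = z2" using e2 unfolding \<zeta>3_def exp_add
        by (metis exp_eq mult_1 exp_add add_0 exp_zero) 
      have H3: "\<zeta>3 \<in> H" using H2 by (simp add: H_def \<zeta>3_def)
      have "G \<zeta>3 = G \<zeta>1" using n e2 e3 by (simp add: G_def \<zeta>3_def)
      hence "\<zeta>3 = \<zeta>1" using inj_onD[OF Ginj _ H3 H1] by blast
      thus ?thesis using e1 e3 by simp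
    qed
  qed
qed


definition g where "g = inv_into (ball 0 1) \<phi>"
definition D where "D = \<phi> ` ball 0 1"

lemma openD: "open D"
  unfolding D_def by (rule open_mapping_thm3[OF phi_holo _ phi_inj]) simp

lemma g_phi: "z \<in> ball 0 1 \<Longrightarrow> g (\<phi> z) = z"
  unfolding g_def by (rule inv_into_f_f[OF phi_inj])

lemma g_in: "w \<in> D \<Longrightarrow> g w \<in> ball 0 1"
  unfolding g_def D_def by (rule inv_into_into)

lemma phi_g: "w \<in> D \<Longrightarrow> \<phi> (g w) = w"
  unfolding g_def D_def by (rule f_inv_into_f)

lemma phi_in: "z \<in> ball 0 1 \<Longrightarrow> \<phi> z \<in> D"
  unfolding D_def by blast

lemma g_holo_deriv: "g holomorphic_on D \<and> (\<forall>w\<in>D. (g has_field_derivative 1 / deriv \<phi> (g w)) (at w))"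
proof -
  obtain g0 where g0h: "g0 holomorphic_on D" and g0d: "\<And>z. z \<in> ball 0 1 \<Longrightarrow> deriv \<phi> z * deriv g0 (\<phi> z) = 1"
    and g0i: "\<And>z. z \<in> ball 0 1 \<Longrightarrow> g0 (\<phi> z) = z"
    using holomorphic_has_inverse[OF phi_holo _ phi_inj] unfolding D_def by auto
  have eq: "g0 w = g w" if "w \<in> D" for w
    using that g0i g_phi unfolding D_def by auto
  have gh: "g holomorphic_on D" using holomorphic_transform[OF g0h eq] .
  moreover have "(g has_field_derivative 1 / deriv \<phi> (g w)) (at w)" if w: "w \<in> D" for w
  proof -
    have "deriv g w = deriv g0 w"
      by (rule deriv_cong_ev[OF _ refl]) (use eq openD w in \<open>auto simp: eventually_nhds intro!: exI[of _ D]\<close>)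
    also have "\<dots> = 1 / deriv \<phi> (g w)"
      using g0d[OF g_in[OF w]] phi_g[OF w] dphi_nz[OF g_in[OF w]] by (simp add: field_simps)
    finally show ?thesis using holomorphic_derivI[OF gh openD w] by simp
  qed
  ultimately show ?thesis by blast
qed

lemma g_holo: "g holomorphic_on D" using g_holo_deriv by blast
lemma g_deriv: "w \<in> D \<Longrightarrow> (g has_field_derivative 1 / deriv \<phi> (g w)) (at w)" using g_holo_deriv by blast

lemma spiral:
  assumes z0: "z0 \<in> ball 0 1" and t0: "t0 \<ge> 0"
  shows "exp (- c * of_real t0) * \<phi> z0 \<in> D"
proof -
  define r where "r = norm z0"
  have r1: "r < 1" using z0 by (simp add: r_def)
  define K where "K = \<phi> ` cball 0 r"
  have cb: "cball 0 r \<subseteq> ball 0 1" using r1 by auto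
  have KD: "K \<subseteq> D" unfolding K_def D_def using cb by blast
  have contphi: "continuous_on (ball 0 1) \<phi>" by (rule holomorphic_on_imp_continuous_on[OF phi_holo])
  have "compact K" unfolding K_def
    by (rule compact_continuous_image[OF continuous_on_subset[OF contphi cb]]) simp
  hence closedK: "closed K" by (rule compact_imp_closed)
  define e where "e s = exp (- c * of_real s) * \<phi> z0" for s :: real
  have conte: "continuous_on UNIV e" unfolding e_def by (intro continuous_intros)
  have e0: "e 0 \<in> K" unfolding e_def K_def r_def by auto
  define C where "C = {t. 0 \<le> t \<and> (\<forall>s\<in>{0..t}. e s \<in> K)}"
  have C0: "0 \<in> C" using e0 by (simp add: C_def)
  have Cdown: "s \<in> C" if "t \<in> C" "0 \<le> s" "s \<le> t" for s t using that by (auto simp: C_def)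
  have step: "\<exists>\<epsilon>>0. t + \<epsilon> \<in> C" if tC: "t \<in> C" for t
  proof -
    have t0': "0 \<le> t" using tC by (simp add: C_def)
    have etD: "e t \<in> D" using tC KD by (auto simp: C_def)
    have "isCont e t" using conte by (simp add: continuous_on_eq_continuous_at)
    hence "eventually (\<lambda>s. e s \<in> D) (at t)"
      using topological_tendstoD[of e "e t" "at t" D] openD etD by (simp add: isCont_def)
    then obtain \<delta> where \<delta>: "\<delta> > 0" "\<And>s. s \<noteq> t \<Longrightarrow> dist s t < \<delta> \<Longrightarrow> e s \<in> D"
      unfolding eventually_at by auto
    define \<epsilon> where "\<epsilon> = \<delta> / 2"
    have \<epsilon>: "\<epsilon> > 0" using \<delta> by (simp add: \<epsilon>_def)
    have inD: "e s \<in> D" if "0 \<le> s" "s \<le> t + \<epsilon>" for s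
    proof (cases "s \<le> t")
      case True thus ?thesis using tC that KD by (auto simp: C_def)
    next
      case False thus ?thesis using \<delta>(2)[of s] that by (auto simp: \<epsilon>_def dist_real_def)
    qed
    define \<gamma> where "\<gamma> s = g (e s)" for s
    define n where "n s = \<gamma> s \<bullet> \<gamma> s" for s
    have nder: "\<exists>y. DERIV n s :> y \<and> y \<le> 0" if "0 \<le> s" "s \<le> t + \<epsilon>" for s
    proof -
      have esD: "e s \<in> D" using inD[OF that] .
      define y where "y = \<gamma> s"
      have yb: "y \<in> ball 0 1" using g_in[OF esD] by (simp add: y_def \<gamma>_def)
      have py: "\<phi> y = e s" using phi_g[OF esD] by (simp add: y_def \<gamma>_def)
      have ed: "(e has_vector_derivative (- c * e s)) (at s)"
      proof -
        have "((\<lambda>w. exp (- c * w) * \<phi> z0) has_field_derivative (- c * e s)) (at (of_real s))"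
          by (auto intro!: derivative_eq_intros simp: e_def)
        from has_vector_derivative_real_field[OF this, where s=UNIV] show ?thesis by (simp add: e_def[abs_def])
      qed
      have gd: "(\<gamma> has_vector_derivative (- c * e s) * (1 / deriv \<phi> y)) (at s)"
        using field_vector_diff_chain_at[OF ed g_deriv[OF esD]] by (simp add: \<gamma>_def[abs_def] o_def y_def)
      have "(- c * e s) * (1 / deriv \<phi> y) = - (y * q y)"
        using E[OF yb] dphi_nz[OF yb] py by (simp add: field_simps)
      hence gd': "(\<gamma> has_vector_derivative - (y * q y)) (at s)" using gd by simp
      have "(n has_derivative (\<lambda>h. \<gamma> s \<bullet> (h *\<^sub>R - (y * q y)) + (h *\<^sub>R - (y * q y)) \<bullet> \<gamma> s)) (at s)"
        unfolding n_def[abs_def]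
        by (rule has_derivative_inner[OF gd'[unfolded has_vector_derivative_def] gd'[unfolded has_vector_derivative_def]])
      hence "DERIV n s :> 2 * (y \<bullet> - (y * q y))"
        unfolding has_field_derivative_def y_def
        by (rule has_derivative_eq_rhs) (auto simp: inner_commute algebra_simps fun_eq_iff)
      moreover have "2 * (y \<bullet> - (y * q y)) \<le> 0"
      proof -
        have h1: "y \<bullet> - (y * q y) = - (((Re y)^2 + (Im y)^2) * Re (q y))"
          by (simp add: inner_complex_def algebra_simps power2_eq_square)
        have h2: "((Re y)^2 + (Im y)^2) * Re (q y) \<ge> 0"
          using q_re[OF yb] by (intro mult_nonneg_nonneg) auto
        show ?thesis using h1 h2 by linarith
      qed
      ultimately show ?thesis by blast
    qed
    have "t + \<epsilon> \<in> C"
    proof -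
      have "e s \<in> K" if s: "0 \<le> s" "s \<le> t + \<epsilon>" for s
      proof -
        have "n s \<le> n 0"
          by (rule DERIV_nonpos_imp_nonincreasing[OF s(1)]) (use nder s in auto)
        moreover have "\<gamma> 0 = z0" using g_phi[OF z0] by (simp add: \<gamma>_def e_def)
        ultimately have "norm (\<gamma> s) ^ 2 \<le> r ^ 2" by (simp add: n_def r_def power2_norm_eq_inner)
        hence "norm (\<gamma> s) \<le> r" using r1 by (simp add: r_def abs_le_square_iff)
        hence "\<gamma> s \<in> cball 0 r" by simp
        moreover have "\<phi> (\<gamma> s) = e s" using phi_g[OF inD[OF s]] by (simp add: \<gamma>_def)
        ultimately show ?thesis unfolding K_def by (metis image_eqI)
      qed
      thus ?thesis using t0' \<epsilon> by (simp add: C_def)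
    qed
    thus ?thesis using \<epsilon> by blast
  qed
  have allC: "t \<in> C" if "t \<ge> 0" for t
  proof (rule ccontr)
    assume tn: "t \<notin> C"
    have bdd: "s < t" if "s \<in> C" for s using Cdown[OF that] tn \<open>t \<ge> 0\<close> by force
    hence bddC: "bdd_above C" by (meson bdd_aboveI less_imp_le)
    define T where "T = Sup C"
    have T0: "0 \<le> T" using cSup_upper[OF C0 bddC] by (simp add: T_def)
    have TC: "T \<in> C"
    proof -
      have lt: "e s \<in> K" if sT: "0 \<le> s" "s < T" for s
      proof -
        have "\<exists>u\<in>C. s < u" using less_cSup_iff[of C s] C0 bddC sT by (auto simp: T_def)
        then obtain u where "u \<in> C" "s < u" by blast
        thus ?thesis using sT by (auto simp: C_def)
      qed
      have "e s \<in> K" if "0 \<le> s" "s \<le> T" for s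
      proof (cases "s < T")
        case True thus ?thesis using lt that by simp
      next
        case False
        hence sT: "s = T" using that by simp
        show ?thesis
        proof (cases "T = 0")
          case True thus ?thesis using e0 sT by simp
        next
          case False
          have cl: "closed ({0..T} \<inter> e -` K)"
            by (rule continuous_closed_preimage[OF continuous_on_subset[OF conte] _ closedK]) auto
          have "{0..<T} \<subseteq> {0..T} \<inter> e -` K" using lt by auto
          hence "closure {0..<T} \<subseteq> {0..T} \<inter> e -` K" using cl by (rule closure_minimal)
          moreover have "closure {0..<T} = {0..T}" using False T0 by (simp add: closure_atLeastLessThan)
          ultimately show ?thesis using that by auto
        qed
      qed
      thus ?thesis using T0 by (simp add: C_def)
    qed
    obtain \<epsilon> where "\<epsilon> > 0" "T + \<epsilon> \<in> C" using step[OF TC] by blast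
    hence "T + \<epsilon> \<le> T" using cSup_upper[OF _ bddC, of "T + \<epsilon>"] by (simp add: T_def)
    thus False using \<open>\<epsilon> > 0\<close> by simp
  qed
  have "e t0 \<in> K" using allC[OF t0] by (auto simp: C_def)
  thus ?thesis using KD by (auto simp: e_def)
qed


lemma cmod_c: "cmod c = b * sqrt (1 + (a / b)^2)"
proof -
  have "cmod c = sqrt (b^2 + a^2)" by (simp add: c_def cmod_def)
  also have "b^2 + a^2 = b^2 * (1 + (a / b)^2)" using b_pos by (simp add: field_simps)
  also have "sqrt \<dots> = b * sqrt (1 + (a / b)^2)" using b_pos by (simp add: real_sqrt_mult)
  finally show ?thesis .
qed

lemma exp_psi: "exp (\<i> * of_real (arccot (a / b) - pi / 2)) = c / of_real (cmod c)"
proof -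
  define x where "x = a / b"
  have sq: "sqrt (1 + x^2) > 0" by (simp add: add_pos_nonneg)
  have "exp (\<i> * of_real (arccot (a / b) - pi / 2)) = cis (- arctan x)"
    by (simp add: cis_conv_exp arccot_def x_def)
  also have "\<dots> = Complex (1 / sqrt (1 + x^2)) (- (x / sqrt (1 + x^2)))"
    by (simp add: cis.ctr cos_arctan sin_arctan)
  also have "\<dots> = c / of_real (cmod c)"
  proof -
    have m: "cmod c = b * sqrt (1 + x^2)" using cmod_c by (simp add: x_def)
    have "c / of_real (cmod c) = Complex (b / cmod c) (- a / cmod c)"
      by (simp add: complex_eq_iff c_def Re_divide_of_real Im_divide_of_real)
    also have "\<dots> = Complex (1 / sqrt (1 + x^2)) (- (x / sqrt (1 + x^2)))"
      using b_pos sq unfolding m by (simp add: x_def field_simps)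
    finally show ?thesis by simp
  qed
  finally show ?thesis .
qed

lemma spirallike: "spirallike_fun (arccot (a / b) - pi / 2) \<phi>"
proof -
  have contg: "continuous_on D g" by (rule holomorphic_on_imp_continuous_on[OF g_holo])
  have contphi: "continuous_on (ball 0 1) \<phi>" by (rule holomorphic_on_imp_continuous_on[OF phi_holo])
  have i1: "\<phi> ` ball 0 1 = D" by (simp add: D_def)
  have i2: "g ` D = ball 0 1"
  proof
    show "g ` D \<subseteq> ball 0 1" using g_in by blast
    show "ball 0 1 \<subseteq> g ` D" using g_phi phi_in by (metis image_eqI subsetI)
  qed
  have hom: "(ball 0 1 :: complex set) homeomorphic D"
  proof -
    have "homeomorphism (ball 0 1) D \<phi> g"
      unfolding homeomorphism_def using i1 i2 contphi contg g_phi phi_g by auto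
    thus ?thesis unfolding homeomorphic_def by blast
  qed
  have sc: "simply_connected D"
    using homeomorphic_simply_connected[OF hom convex_imp_simply_connected] by simp
  have conn: "connected D" unfolding D_def by (rule connected_continuous_image[OF contphi]) simp
  have spir: "w0 * exp (- exp (\<i> * of_real (arccot (a / b) - pi / 2)) * of_real s) \<in> D"
    if w0: "w0 \<in> D" and s: "s \<ge> 0" for w0 s
  proof -
    obtain z0 where z0: "z0 \<in> ball 0 1" "w0 = \<phi> z0" using w0 by (auto simp: D_def)
    have cm: "cmod c > 0" using c_nz by simp
    have "w0 * exp (- exp (\<i> * of_real (arccot (a / b) - pi / 2)) * of_real s)
        = exp (- c * of_real (s / cmod c)) * \<phi> z0"
      unfolding exp_psi using z0 by (simp add: mult.commute)
    also have "\<dots> \<in> D" by (rule spiral[OF z0(1)]) (use s cm in simp)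
    finally show ?thesis .
  qed
  show ?thesis
    unfolding spirallike_fun_def spirallike_domain_def D_def[symmetric]
    using phi_holo phi_inj phi0 openD conn sc spir phi_in[of 0] by auto
qed

definition R where "R t z = exp (- \<i> * of_real (a * t)) * z" for t :: real and z :: complex
definition W where "W t z = exp (- c * of_real t) * \<phi> (R t z)" for t :: real and z :: complex

lemma norm_R: "norm (R t z) = norm z"
  by (simp add: R_def norm_mult)

lemma R_in: "z \<in> ball 0 1 \<Longrightarrow> R t z \<in> ball 0 1"
  using norm_R by simp

lemma W_in: "z \<in> ball 0 1 \<Longrightarrow> t \<ge> 0 \<Longrightarrow> W t z \<in> D"
  unfolding W_def by (rule spiral[OF R_in])

lemma loewner_F: "loewner_solution p a (\<lambda>z t. g (W t z))"
  unfolding loewner_solution_def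
proof (intro conjI ballI allI impI)
  fix t :: real assume t: "t \<ge> 0"
  have Rh: "(R t) holomorphic_on ball 0 1" unfolding R_def[abs_def] by (intro holomorphic_intros)
  have "(\<lambda>z. \<phi> (R t z)) holomorphic_on ball 0 1"
  proof -
    have "R t ` ball 0 1 \<subseteq> ball 0 1" using R_in by blast
    thus ?thesis using holomorphic_on_compose_gen[OF Rh phi_holo] by (auto simp: o_def)
  qed
  hence "(\<lambda>z. W t z) holomorphic_on ball 0 1" unfolding W_def by (intro holomorphic_intros)
  moreover have "W t ` ball 0 1 \<subseteq> D" using W_in[OF _ t] by blast
  ultimately show "(\<lambda>z. g (W t z)) holomorphic_on ball 0 1"
    using holomorphic_on_compose_gen[of "\<lambda>z. W t z" "ball 0 1" g D] g_holo
    by (auto simp: o_def)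
next
  have contphi: "continuous_on (ball 0 1) \<phi>" by (rule holomorphic_on_imp_continuous_on[OF phi_holo])
  have cR: "continuous_on (ball 0 1 \<times> {0..}) (\<lambda>x. R (snd x) (fst x))"
    unfolding R_def by (intro continuous_intros)
  have cphiR: "continuous_on (ball 0 1 \<times> {0..}) (\<lambda>x. \<phi> (R (snd x) (fst x)))"
    by (rule continuous_on_compose2[OF contphi cR]) (auto intro: R_in)
  have cW: "continuous_on (ball 0 1 \<times> {0..}) (\<lambda>x. W (snd x) (fst x))"
    unfolding W_def by (intro continuous_intros cphiR)
  have "continuous_on (ball 0 1 \<times> {0..}) (\<lambda>x. g (W (snd x) (fst x)))"
    by (rule continuous_on_compose2[OF holomorphic_on_imp_continuous_on[OF g_holo] cW]) (auto intro: W_in)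
  thus "continuous_on (ball 0 1 \<times> {0..}) (\<lambda>(z, t). g (W t z))"
    by (simp add: case_prod_unfold)
next
  fix z :: complex assume "z \<in> ball 0 1"
  thus "g (W 0 z) = z" by (simp add: W_def R_def g_phi)
next
  fix z :: complex and t :: real assume z: "z \<in> ball 0 1" and t: "t \<ge> 0"
  define u where "u = R t z"
  have ub: "u \<in> ball 0 1" using R_in[OF z] by (simp add: u_def)
  define V where "V = W t z"
  have VD: "V \<in> D" using W_in[OF z t] by (simp add: V_def)
  define y where "y = g V"
  have yb: "y \<in> ball 0 1" using g_in[OF VD] by (simp add: y_def)
  define Ez where "Ez = exp (- \<i> * of_real (a * t))"
  define X where "X = exp (- c * of_real t)"
  have u_eq: "u = Ez * z" by (simp add: u_def R_def Ez_def)
  have V_eq: "V = X * \<phi> u" by (simp add: V_def W_def X_def u_def)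
  have dphiu: "(\<phi> has_field_derivative deriv \<phi> u) (at u)"
    using holomorphic_derivI[OF phi_holo _ ub] by simp
  define W' where "W' = - c * X * \<phi> u + X * (deriv \<phi> u * (- \<i> * of_real a * u))"
  have Wd: "((\<lambda>s. W s z) has_vector_derivative W') (at t)"
  proof -
    have gt0: "exp (- (\<i> * of_real a * of_real t)) = Ez" by (simp add: Ez_def mult.assoc)
    have inner: "((\<lambda>w. exp (- \<i> * of_real a * w) * z) has_field_derivative (- \<i> * of_real a * u)) (at (of_real t))"
    proof -
      have ee: "exp (- (\<i> * (of_real a * of_real t))) = Ez" by (simp add: Ez_def)
      show ?thesis by (auto intro!: derivative_eq_intros simp: u_eq ee mult.assoc)
    qed
    have i2: "((\<lambda>w. \<phi> (exp (- \<i> * of_real a * w) * z)) has_field_derivative deriv \<phi> u * (- \<i> * of_real a * u)) (at (of_real t))"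
    proof -
      have gt: "exp (- \<i> * of_real a * of_real t) * z = u" by (simp add: u_eq Ez_def mult.assoc)
      have d': "(\<phi> has_field_derivative deriv \<phi> u) (at (exp (- \<i> * of_real a * of_real t) * z))"
        unfolding gt by (rule dphiu)
      show ?thesis using DERIV_chain2[OF d' inner] by simp
    qed
    have "((\<lambda>w. exp (- c * w) * \<phi> (exp (- \<i> * of_real a * w) * z)) has_field_derivative W') (at (of_real t))"
      unfolding W'_def X_def using i2 by (auto intro!: derivative_eq_intros simp: u_eq gt0)
    hence h: "((\<lambda>x. exp (- c * of_real x) * \<phi> (exp (- \<i> * of_real a * of_real x) * z)) has_vector_derivative W') (at t)"
      by (rule has_vector_derivative_real_field)
    have feq: "(\<lambda>s. W s z) = (\<lambda>x. exp (- c * of_real x) * \<phi> (exp (- \<i> * of_real a * of_real x) * z))"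
      by (rule ext) (simp add: W_def R_def mult.assoc)
    show ?thesis unfolding feq by (rule h)
  qed
  have Fd: "((\<lambda>s. g (W s z)) has_vector_derivative W' * (1 / deriv \<phi> y)) (at t)"
    using field_vector_diff_chain_at[OF Wd g_deriv[OF VD, unfolded V_def]] by (simp add: o_def V_def y_def)
  have dF: "deriv (\<lambda>w. g (W t w)) z = 1 / deriv \<phi> y * (X * (deriv \<phi> u * Ez))"
  proof (rule DERIV_imp_deriv)
    have r: "((\<lambda>w. R t w) has_field_derivative Ez) (at z)"
      unfolding R_def Ez_def by (auto intro!: derivative_eq_intros)
    have "((\<lambda>w. \<phi> (R t w)) has_field_derivative deriv \<phi> u * Ez) (at z)"
      using DERIV_chain2[OF _ r, of \<phi> "deriv \<phi> u"] dphiu by (simp add: u_def)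
    hence "((\<lambda>w. W t w) has_field_derivative X * (deriv \<phi> u * Ez)) (at z)"
      unfolding W_def X_def by (auto intro!: derivative_eq_intros)
    from DERIV_chain2[OF g_deriv[OF VD, unfolded V_def] this]
    show "((\<lambda>w. g (W t w)) has_field_derivative 1 / deriv \<phi> y * (X * (deriv \<phi> u * Ez))) (at z)"
      by (simp add: V_def y_def)
  qed
  have key: "u * deriv \<phi> u * p u = c * \<phi> u + \<i> * of_real a * u * deriv \<phi> u"
  proof -
    have "u * deriv \<phi> u * p u = u * deriv \<phi> u * q u + \<i> * of_real a * u * deriv \<phi> u"
      by (simp add: q_def algebra_simps)
    thus ?thesis using E[OF ub] by simp
  qed
  have "W' * (1 / deriv \<phi> y) = - z * (1 / deriv \<phi> y * (X * (deriv \<phi> u * Ez))) * p u"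
  proof -
    have "- z * (1 / deriv \<phi> y * (X * (deriv \<phi> u * Ez))) * p u
        = (1 / deriv \<phi> y) * (- X * (u * deriv \<phi> u * p u))"
      by (simp add: u_eq algebra_simps)
    also have "\<dots> = (1 / deriv \<phi> y) * W'"
      unfolding key W'_def by (simp add: algebra_simps)
    finally show ?thesis by simp
  qed
  hence "((\<lambda>s. g (W s z)) has_vector_derivative
           - z * deriv (\<lambda>w. g (W t w)) z * p (exp (- \<i> * of_real (a * t)) * z)) (at t)"
    using Fd dF by (simp add: u_eq Ez_def)
  thus "((\<lambda>s. g (W s z)) has_vector_derivative
           - z * deriv (\<lambda>w. g (W t w)) z * p (exp (- \<i> * of_real (a * t)) * z)) (at t within {0..})"
    by (rule has_vector_derivative_at_within)
qed


lemma unique: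
  assumes f: "loewner_solution p a f" and z: "z \<in> ball 0 1" and t: "t \<ge> 0"
  shows "f z t = g (W t z)"
proof -
  have F1: "\<forall>s\<ge>0. (\<lambda>z. f z s) holomorphic_on ball 0 1"
    using f unfolding loewner_solution_def by blast
  have cont: "continuous_on (ball 0 1 \<times> {0..}) (\<lambda>(z, s). f z s)"
    using f unfolding loewner_solution_def by blast
  have F3: "\<forall>z\<in>ball 0 1. f z 0 = z"
    using f unfolding loewner_solution_def by blast
  have F4: "\<forall>z\<in>ball 0 1. \<forall>s\<ge>0.
        ((\<lambda>r. f z r) has_vector_derivative
           (- z * deriv (\<lambda>w. f w s) z * p (exp (- \<i> * of_real (a * s)) * z))) (at s within {0..})"
    using f unfolding loewner_solution_def by blast
  have hol: "\<And>s. s \<ge> 0 \<Longrightarrow> (\<lambda>z. f z s) holomorphic_on ball 0 1" using F1 by blast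
  have init: "\<And>z. z \<in> ball 0 1 \<Longrightarrow> f z 0 = z" using F3 by blast
  have der: "\<And>z s. z \<in> ball 0 1 \<Longrightarrow> s \<ge> 0 \<Longrightarrow>
        ((\<lambda>r. f z r) has_vector_derivative
           (- z * deriv (\<lambda>w. f w s) z * p (exp (- \<i> * of_real (a * s)) * z))) (at s within {0..})"
    using F4 by blast
  have jc: "continuous_on (ball 0 1 \<times> {0..}) (\<lambda>(z, s). deriv (\<lambda>w. f w s) z)"
    by (rule joint_deriv_cont[OF hol cont])
  define Df where "Df s w = deriv (\<lambda>v. f v s) w" for s w
  have jc2: "continuous_on ({0..} \<times> ball 0 1) (\<lambda>x. blinfun_mult_right (Df (fst x) (snd x)))"
  proof -
    have "continuous_on ({0..} \<times> ball 0 1) (\<lambda>x. (\<lambda>(z, s). deriv (\<lambda>w. f w s) z) (snd x, fst x))"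
      by (rule continuous_on_compose2[OF jc]) (auto intro!: continuous_intros)
    hence "continuous_on ({0..} \<times> ball 0 1) (\<lambda>x. Df (fst x) (snd x))"
      by (simp add: Df_def)
    thus ?thesis
      by (rule continuous_on_compose2[OF linear_continuous_on[OF bounded_linear_blinfun_mult_right]]) auto
  qed
  define u0 where "u0 = R t z"
  have u0b: "u0 \<in> ball 0 1" using R_in[OF z] by (simp add: u0_def)
  define V0 where "V0 = \<phi> u0"
  define Y where "Y s = exp (- c * (of_real t - of_real s)) * V0" for s :: real
  have YD: "Y s \<in> D" if "s \<le> t" for s
    using spiral[OF u0b, of "t - s"] that by (simp add: Y_def V0_def)
  define y where "y s = g (Y s)" for s
  have yb: "y s \<in> ball 0 1" if "s \<le> t" for s using g_in[OF YD[OF that]] by (simp add: y_def)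
  have phiy: "\<phi> (y s) = Y s" if "s \<le> t" for s using phi_g[OF YD[OF that]] by (simp add: y_def)
  define \<zeta> where "\<zeta> s = exp (\<i> * of_real (a * s)) * y s" for s
  have \<zeta>b: "\<zeta> s \<in> ball 0 1" if "s \<le> t" for s
    using yb[OF that] by (simp add: \<zeta>_def norm_mult)
  have y\<zeta>: "exp (- \<i> * of_real (a * s)) * \<zeta> s = y s" for s
    by (simp add: \<zeta>_def exp_minus field_simps)
  have \<zeta>t: "\<zeta> t = z"
  proof -
    have "y t = u0" using g_phi[OF u0b] by (simp add: y_def Y_def V0_def)
    thus ?thesis by (simp add: \<zeta>_def u0_def R_def exp_minus field_simps)
  qed
  have \<zeta>0: "\<zeta> 0 = g (W t z)"
    by (simp add: \<zeta>_def y_def Y_def V0_def u0_def W_def)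
  have \<zeta>d: "(\<zeta> has_vector_derivative \<zeta> s * p (y s)) (at s)" if st: "s \<le> t" for s
  proof -
    have "((\<lambda>w. exp (- c * (of_real t - w)) * V0) has_field_derivative c * Y s) (at (of_real s))"
      by (auto intro!: derivative_eq_intros simp: Y_def)
    hence Yd: "(Y has_vector_derivative c * Y s) (at s)"
      using has_vector_derivative_real_field[where s=UNIV] unfolding Y_def[abs_def] by fastforce
    have yd0: "(y has_vector_derivative (c * Y s) * (1 / deriv \<phi> (g (Y s)))) (at s)"
      using field_vector_diff_chain_at[OF Yd g_deriv[OF YD[OF st]]] by (simp add: o_def y_def[abs_def])
    have "(c * Y s) * (1 / deriv \<phi> (g (Y s))) = y s * q (y s)"
      using E[OF yb[OF st]] dphi_nz[OF yb[OF st]] phiy[OF st] by (simp add: y_def field_simps)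
    hence yd: "(y has_vector_derivative y s * q (y s)) (at s)" using yd0 by simp
    have ed: "((\<lambda>s. exp (\<i> * of_real (a * s))) has_vector_derivative \<i> * of_real a * exp (\<i> * of_real (a * s))) (at s)"
    proof -
      have "((\<lambda>w. exp (\<i> * of_real a * w)) has_field_derivative \<i> * of_real a * exp (\<i> * of_real (a * s))) (at (of_real s))"
        by (auto intro!: derivative_eq_intros simp: mult.assoc)
      from has_vector_derivative_real_field[OF this, where s=UNIV] show ?thesis by (simp add: mult.assoc)
    qed
    have "(\<zeta> has_vector_derivative (exp (\<i> * of_real (a * s)) * (y s * q (y s)) + \<i> * of_real a * exp (\<i> * of_real (a * s)) * y s)) (at s)"
      unfolding \<zeta>_def[abs_def] by (rule has_vector_derivative_mult[OF ed yd])
    moreover have "exp (\<i> * of_real (a * s)) * (y s * q (y s)) + \<i> * of_real a * exp (\<i> * of_real (a * s)) * y s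
        = \<zeta> s * p (y s)"
      by (simp add: \<zeta>_def q_def algebra_simps)
    ultimately show ?thesis by simp
  qed
  define k where "k s = f (\<zeta> s) s" for s
  have kd: "(k has_derivative (\<lambda>h. 0)) (at s within {0..t})" if s: "s \<in> {0..t}" for s
  proof -
    have s0: "s \<ge> 0" and st: "s \<le> t" using s by auto
    define Ft where "Ft = - \<zeta> s * Df s (\<zeta> s) * p (exp (- \<i> * of_real (a * s)) * \<zeta> s)"
    have fx: "((\<lambda>x. f (\<zeta> s) x) has_derivative (\<lambda>h. h *\<^sub>R Ft)) (at s within {0..})"
      using der[OF \<zeta>b[OF st] s0] unfolding has_vector_derivative_def Ft_def Df_def .
    have fy: "((\<lambda>y. f y x) has_derivative blinfun_apply (blinfun_mult_right (Df x y))) (at y within ball 0 1)"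
      if "x \<in> {0..}" "y \<in> ball 0 1" for x y
    proof -
      have "((\<lambda>y. f y x) has_field_derivative Df x y) (at y)"
        unfolding Df_def using holomorphic_derivI[OF hol _ that(2)] that(1) by simp
      thus ?thesis unfolding has_field_derivative_def blinfun_mult_right.rep_eq by (rule has_derivative_at_withinI)
    qed
    have fyc: "continuous (at (s, \<zeta> s) within {0..} \<times> ball 0 1) (\<lambda>(x, y). blinfun_mult_right (Df x y))"
    proof -
      have "(s, \<zeta> s) \<in> {0..} \<times> ball 0 1" using \<zeta>b[OF st] s0 by simp
      with jc2 have "continuous (at (s, \<zeta> s) within {0..} \<times> ball 0 1) (\<lambda>x. blinfun_mult_right (Df (fst x) (snd x)))"
        unfolding continuous_on_eq_continuous_within by blast
      thus ?thesis by (simp add: case_prod_unfold)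
    qed
    have part: "((\<lambda>(x, y). f y x) has_derivative (\<lambda>(tx, ty). tx *\<^sub>R Ft + blinfun_apply (blinfun_mult_right (Df s (\<zeta> s))) ty))
        (at (s, \<zeta> s) within {0..} \<times> ball 0 1)"
      by (rule has_derivative_partialsI[where f="\<lambda>x y. f y x", OF fx fy fyc]) (use \<zeta>b[OF st] in auto)
    define P where "P x = (x, \<zeta> x)" for x
    have Pd: "(P has_derivative (\<lambda>h. (h, h *\<^sub>R (\<zeta> s * p (y s))))) (at s within {0..t})"
    proof -
      have d1: "((\<lambda>x. x) has_derivative (\<lambda>h. h)) (at s within {0..t})" by (rule has_derivative_ident)
      have d2: "(\<zeta> has_derivative (\<lambda>h. h *\<^sub>R (\<zeta> s * p (y s)))) (at s within {0..t})"
        by (rule has_derivative_at_withinI[OF \<zeta>d[OF st, unfolded has_vector_derivative_def]])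
      show ?thesis unfolding P_def by (rule has_derivative_Pair[OF d1 d2])
    qed
    have sub: "P ` {0..t} \<subseteq> {0..} \<times> ball 0 1" using \<zeta>b by (auto simp: P_def)
    have part': "((\<lambda>(x, y). f y x) has_derivative (\<lambda>(tx, ty). tx *\<^sub>R Ft + blinfun_apply (blinfun_mult_right (Df s (\<zeta> s))) ty))
        (at (P s) within P ` {0..t})"
      using has_derivative_subset[OF part sub] by (simp add: P_def)
    have comp: "(k has_derivative (\<lambda>h. h *\<^sub>R Ft + Df s (\<zeta> s) * (h *\<^sub>R (\<zeta> s * p (y s))))) (at s within {0..t})"
      using has_derivative_in_compose[OF Pd part'] by (simp add: k_def[abs_def] P_def)
    have "Ft + Df s (\<zeta> s) * (\<zeta> s * p (y s)) = 0"
      unfolding Ft_def y\<zeta> by (simp add: algebra_simps)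
    note zero = this
    have "(\<lambda>h. h *\<^sub>R Ft + Df s (\<zeta> s) * (h *\<^sub>R (\<zeta> s * p (y s)))) = (\<lambda>h. 0)"
    proof (rule ext)
      fix h :: real
      have "h *\<^sub>R Ft + Df s (\<zeta> s) * (h *\<^sub>R (\<zeta> s * p (y s)))
          = of_real h * (Ft + Df s (\<zeta> s) * (\<zeta> s * p (y s)))"
        by (simp add: scaleR_conv_of_real algebra_simps)
      also have "\<dots> = 0" using zero by simp
      finally show "h *\<^sub>R Ft + Df s (\<zeta> s) * (h *\<^sub>R (\<zeta> s * p (y s))) = 0" .
    qed
    thus ?thesis using comp by simp
  qed
  obtain C where "\<forall>x\<in>{0..t}. k x = C"
    using has_derivative_zero_constant[of "{0..t}" k] kd by auto
  hence "k t = k 0" using t by auto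
  thus ?thesis using init[OF \<zeta>b[of 0]] t \<zeta>t \<zeta>0 by (simp add: k_def)
qed

end

theorem proposition3p8:
  fixes p \<phi> :: "complex \<Rightarrow> complex" and a b :: real
  assumes p_holo: "p holomorphic_on ball 0 1"
    and p_re: "\<forall>z\<in>ball 0 1. Re (p z) > 0"
    and p0: "p 0 = of_real b"
    and phi_holo: "\<phi> holomorphic_on ball 0 1"
    and phi0: "\<phi> 0 = 0"
    and dphi0: "deriv \<phi> 0 = 1"
    and phi_eq: "\<forall>z\<in>ball 0 1 - {0}.
                   z * deriv \<phi> z / \<phi> z = (of_real b - \<i> * of_real a) / (p z - \<i> * of_real a)"
  shows "spirallike_fun (arccot (a / b) - pi / 2) \<phi> \<and>
         loewner_solution p a
           (\<lambda>z t. inv_into (ball 0 1) \<phi>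
              (exp (- (of_real b - \<i> * of_real a) * of_real t) * \<phi> (exp (- \<i> * of_real (a * t)) * z))) \<and>
         (\<forall>f. loewner_solution p a f \<longrightarrow>
            (\<forall>z\<in>ball 0 1. \<forall>t\<ge>0. f z t = inv_into (ball 0 1) \<phi>
              (exp (- (of_real b - \<i> * of_real a) * of_real t) * \<phi> (exp (- \<i> * of_real (a * t)) * z))))"
proof -
  interpret L: LS p \<phi> a b
    by (rule LS.intro) (use p_holo p_re p0 phi_holo phi0 dphi0 phi_eq in auto)
  have geq: "inv_into (ball 0 1) \<phi> = L.g" by (simp add: L.g_def)
  have Weq: "\<And>t z. exp (- (of_real b - \<i> * of_real a) * of_real t) * \<phi> (exp (- \<i> * of_real (a * t)) * z) = L.W t z"
    by (simp add: L.W_def L.R_def L.c_def)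
  show ?thesis
    unfolding geq Weq
    using L.spirallike L.loewner_F L.unique by blast
qed

end
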